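(* If $L \subseteq \Sigma^*$ is regular, then $\psi_L$ is a $\leftarrow$-transduction; in particular $\psi_L(\Sigma^* )$ and $\psi_L(L)$ are regular. Furthermore, $\psi_L$ is a $\leftarrow$-reduction from $L$ to $\psi_L(L)$.
   Context: The Myhill–Nerode congruence: $x\sim_L y$ iff for all $z\in\Sigma^*$, $xz\in L\iff yz\in L$ (finitely many classes for regular $L$). $\psi_L(a_1\cdots a_n)=[a_1\cdots a_n]_{\sim_L}[a_2\cdots a_n]_{\sim_L}\cdots[a_n]_{\sim_L}$, a word over the alphabet $\Sigma^*/{\sim_L}$. A Mealy machine $(Q,\Sigma,\Gamma,q_0,\delta)$ with finite $Q$ and $\delta\colon Q\times\Sigma\to Q\times\Gamma$ defines $\tau_q$ by $\tau_q(\varepsilon)=\varepsilon$, $\tau_p(bu)=c\,\tau_q(u)$ if $\delta(p,b)=(q,c)$; a $\leftarrow$-transduction is a map of the form $x\mapsto\tau_{q_0}(x^\mathsf{R})^\mathsf{R}$ ($^\mathsf{R}$ = word reversal). A $\leftarrow$-reduction from $K$ to $K'$ is a $\leftarrow$-transduction $\tau$ with $x\in K\iff\tau(x)\in K'$ for all $x$. *)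

theory Defs
  imports Main
begin

definition regular :: "'a set \<Rightarrow> 'a list set \<Rightarrow> bool" where
  "regular S L \<longleftrightarrow> finite S \<and> L \<subseteq> lists S \<and>
     (\<exists>(Q :: nat set) (q0 :: nat) (\<delta> :: nat \<Rightarrow> 'a \<Rightarrow> nat) (F :: nat set).
        finite Q \<and> q0 \<in> Q \<and> (\<forall>q\<in>Q. \<forall>a\<in>S. \<delta> q a \<in> Q) \<and>
        (\<forall>w\<in>lists S. w \<in> L \<longleftrightarrow> foldl \<delta> q0 w \<in> F))"

definition mn_equiv :: "'a set \<Rightarrow> 'a list set \<Rightarrow> 'a list \<Rightarrow> 'a list \<Rightarrow> bool" where
  "mn_equiv S L x y \<longleftrightarrow> (\<forall>z\<in>lists S. x @ z \<in> L \<longleftrightarrow> y @ z \<in> L)"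

definition mn_class :: "'a set \<Rightarrow> 'a list set \<Rightarrow> 'a list \<Rightarrow> 'a list set" where
  "mn_class S L x = {y \<in> lists S. mn_equiv S L x y}"

definition mn_quotient :: "'a set \<Rightarrow> 'a list set \<Rightarrow> 'a list set set" where
  "mn_quotient S L = mn_class S L ` lists S"

definition psi :: "'a set \<Rightarrow> 'a list set \<Rightarrow> 'a list \<Rightarrow> 'a list set list" where
  "psi S L w = map (\<lambda>i. mn_class S L (drop i w)) [0..<length w]"

fun mealy_run :: "('q \<Rightarrow> 'a \<Rightarrow> 'q \<times> 'c) \<Rightarrow> 'q \<Rightarrow> 'a list \<Rightarrow> 'c list" where
  "mealy_run \<delta> q [] = []"
| "mealy_run \<delta> q (b # u) = (case \<delta> q b of (q', c) \<Rightarrow> c # mealy_run \<delta> q' u)"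

text \<open>\<open>\<tau>\<close> (on \<open>S\<^sup>*\<close>) is a left-transduction with input alphabet \<open>S\<close> and output alphabet
  \<open>G\<close>: realised by a Mealy machine with finite state set (reading reversed input,
  reversing output).\<close>
definition left_transduction :: "'a set \<Rightarrow> 'c set \<Rightarrow> ('a list \<Rightarrow> 'c list) \<Rightarrow> bool" where
  "left_transduction S G \<tau> \<longleftrightarrow> finite S \<and> finite G \<and>
     (\<exists>(Q :: nat set) (q0 :: nat) (\<delta> :: nat \<Rightarrow> 'a \<Rightarrow> nat \<times> 'c).
        finite Q \<and> q0 \<in> Q \<and> (\<forall>q\<in>Q. \<forall>b\<in>S. fst (\<delta> q b) \<in> Q \<and> snd (\<delta> q b) \<in> G) \<and>
        (\<forall>x\<in>lists S. \<tau> x = rev (mealy_run \<delta> q0 (rev x))))"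

definition left_reduction ::
  "'a set \<Rightarrow> 'c set \<Rightarrow> ('a list \<Rightarrow> 'c list) \<Rightarrow> 'a list set \<Rightarrow> 'c list set \<Rightarrow> bool" where
  "left_reduction S G \<tau> K K' \<longleftrightarrow> left_transduction S G \<tau> \<and>
     (\<forall>x\<in>lists S. x \<in> K \<longleftrightarrow> \<tau> x \<in> K')"

end

theory Submission imports Defs "HOL-Library.FuncSet" begin

lemma regularI_gen:
  fixes Q :: "'b set"
  assumes "finite S" "L \<subseteq> lists S" "finite Q" "qi \<in> Q" "\<forall>q\<in>Q. \<forall>a\<in>S. \<delta> q a \<in> Q"
    "\<forall>w\<in>lists S. w \<in> L \<longleftrightarrow> foldl \<delta> qi w \<in> F"
  shows "regular S L"
proof -
  obtain f :: "'b \<Rightarrow> nat" and n where f: "f ` Q = {i. i < n}" "inj_on f Q"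
    using finite_imp_inj_to_nat_seg[OF assms(3)] by blast
  define dn where "dn m a = f (\<delta> (inv_into Q f m) a)" for m a
  have run: "foldl dn (f q) w = f (foldl \<delta> q w) \<and> foldl \<delta> q w \<in> Q" if "q \<in> Q" "w \<in> lists S" for q w
    using that
  proof (induction w arbitrary: q)
    case Nil then show ?case by simp
  next
    case (Cons a w)
    have "dn (f q) a = f (\<delta> q a)" using Cons.prems f(2) by (simp add: dn_def)
    moreover have "\<delta> q a \<in> Q" using Cons.prems assms(5) by auto
    ultimately show ?case using Cons by simp
  qed
  have H: "\<forall>w\<in>lists S. (w \<in> L) = (foldl dn (f qi) w \<in> f ` (F \<inter> Q))"
  proof
    fix w assume w: "w \<in> lists S"
    from run[OF assms(4) w] have "foldl dn (f qi) w = f (foldl \<delta> qi w)" "foldl \<delta> qi w \<in> Q" by auto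
    then show "(w \<in> L) = (foldl dn (f qi) w \<in> f ` (F \<inter> Q))"
      using assms(6) w f(2) by (auto dest: inj_onD)
  qed
  have C: "\<forall>q\<in>f ` Q. \<forall>a\<in>S. dn q a \<in> f ` Q"
    using assms(5) f(2) by (auto simp: dn_def)
  have D: "finite (f ` Q)" "f qi \<in> f ` Q" using assms by auto
  show ?thesis unfolding regular_def
    using assms(1,2) D C H by blast
qed

lemma transI_gen:
  fixes Q :: "'b set"
  assumes "finite S" "finite G" "finite Q" "qi \<in> Q"
    "\<forall>q\<in>Q. \<forall>b\<in>S. fst (\<delta> q b) \<in> Q \<and> snd (\<delta> q b) \<in> G"
    "\<forall>x\<in>lists S. \<tau> x = rev (mealy_run \<delta> qi (rev x))"
  shows "left_transduction S G \<tau>"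
proof -
  obtain f :: "'b \<Rightarrow> nat" and n where f: "f ` Q = {i. i < n}" "inj_on f Q"
    using finite_imp_inj_to_nat_seg[OF assms(3)] by blast
  define dn where "dn m b = (f (fst (\<delta> (inv_into Q f m) b)), snd (\<delta> (inv_into Q f m) b))" for m b
  have run: "mealy_run dn (f q) w = mealy_run \<delta> q w" if "q \<in> Q" "w \<in> lists S" for q w
    using that
  proof (induction w arbitrary: q)
    case Nil then show ?case by simp
  next
    case (Cons a w)
    have "dn (f q) a = (f (fst (\<delta> q a)), snd (\<delta> q a))" using Cons.prems f(2) by (simp add: dn_def)
    moreover have "fst (\<delta> q a) \<in> Q" using Cons.prems assms(5) by auto
    ultimately show ?case using Cons by (simp split: prod.split)
  qed
  show ?thesis unfolding left_transduction_def
  proof (intro conjI exI[of _ "f ` Q"] exI[of _ "f qi"] exI[of _ dn])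
    show "\<forall>q\<in>f ` Q. \<forall>b\<in>S. fst (dn q b) \<in> f ` Q \<and> snd (dn q b) \<in> G"
      using assms(5) f(2) by (auto simp: dn_def)
    show "\<forall>x\<in>lists S. \<tau> x = rev (mealy_run dn (f qi) (rev x))"
    proof
      fix x assume "x \<in> lists S"
      then have "rev x \<in> lists S" by auto
      then show "\<tau> x = rev (mealy_run dn (f qi) (rev x))"
        using assms(6) run[OF assms(4)] \<open>x \<in> lists S\<close> by simp
    qed
  qed (use assms in auto)
qed

fun sfx :: "('a list \<Rightarrow> 'c) \<Rightarrow> 'a list \<Rightarrow> 'a list \<Rightarrow> 'c list" where
  "sfx C [] v = []"
| "sfx C (a # w) v = C (a # w @ v) # sfx C w v"

lemma sfx_snoc: "sfx C (w @ [a]) v = sfx C w (a # v) @ [C (a # v)]"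
  by (induction w) auto

lemma length_sfx[simp]: "length (sfx C w v) = length w"
  by (induction w) auto

lemma psi_Cons: "psi S L (a # w) = mn_class S L (a # w) # psi S L w"
proof -
  have "[0..<Suc (length w)] = 0 # map Suc [0..<length w]"
    by (simp add: upt_conv_Cons map_Suc_upt del: upt_Suc)
  then show ?thesis by (simp add: psi_def del: upt_Suc)
qed

lemma psi_sfx: "psi S L w = sfx (mn_class S L) w []"
  by (induction w) (simp add: psi_def, simp add: psi_Cons)


locale mn_dfa =
  fixes S :: "'a set" and L :: "'a list set" and Q :: "nat set" and q0 :: nat
    and \<delta> :: "nat \<Rightarrow> 'a \<Rightarrow> nat" and F :: "nat set"
  assumes finS: "finite S" and LS: "L \<subseteq> lists S" and finQ: "finite Q" and q0: "q0 \<in> Q"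
    and cl: "\<forall>q\<in>Q. \<forall>a\<in>S. \<delta> q a \<in> Q"
    and lang: "\<forall>w\<in>lists S. w \<in> L \<longleftrightarrow> foldl \<delta> q0 w \<in> F"
begin

abbreviation cls where "cls \<equiv> mn_class S L"

definition G :: "nat \<Rightarrow> 'a list set" where
  "G q = {y \<in> lists S. \<forall>z\<in>lists S. (foldl \<delta> q z \<in> F) = (foldl \<delta> (foldl \<delta> q0 y) z \<in> F)}"

definition fv :: "'a list \<Rightarrow> nat \<Rightarrow> nat" where
  "fv v = restrict (\<lambda>q. foldl \<delta> q v) Q"

lemma foldl_Q: "q \<in> Q \<Longrightarrow> w \<in> lists S \<Longrightarrow> foldl \<delta> q w \<in> Q"
  using cl by (induction w arbitrary: q) auto

lemma keyL: "y \<in> lists S \<Longrightarrow> z \<in> lists S \<Longrightarrow> (y @ z \<in> L) = (foldl \<delta> (foldl \<delta> q0 y) z \<in> F)"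
  using lang by simp

lemma cls_G: "x \<in> lists S \<Longrightarrow> cls x = G (foldl \<delta> q0 x)"
proof -
  assume x: "x \<in> lists S"
  have e: "(\<forall>z\<in>lists S. (x @ z \<in> L) = (y @ z \<in> L)) =
     (\<forall>z\<in>lists S. (foldl \<delta> (foldl \<delta> q0 x) z \<in> F) = (foldl \<delta> (foldl \<delta> q0 y) z \<in> F))"
    if y: "y \<in> lists S" for y
  proof (intro ball_cong refl)
    fix z assume z: "z \<in> lists S"
    show "(x @ z \<in> L) = (y @ z \<in> L) \<longleftrightarrow>
      (foldl \<delta> (foldl \<delta> q0 x) z \<in> F) = (foldl \<delta> (foldl \<delta> q0 y) z \<in> F)"
      using keyL[OF x z] keyL[OF y z] by simp
  qed
  show ?thesis unfolding mn_class_def mn_equiv_def G_def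
    by (rule Collect_cong) (use e in blast)
qed

lemma cls_app: "x \<in> lists S \<Longrightarrow> v \<in> lists S \<Longrightarrow> cls (x @ v) = G (fv v (foldl \<delta> q0 x))"
  using cls_G[of "x @ v"] foldl_Q[OF q0, of x] by (simp add: fv_def)

lemma sfx_inv: "w \<in> lists S \<Longrightarrow> v \<in> lists S \<Longrightarrow> v' \<in> lists S \<Longrightarrow> fv v = fv v'
   \<Longrightarrow> sfx cls w v = sfx cls w v'"
proof (induction w)
  case (Cons a w)
  have "cls ((a # w) @ v) = cls ((a # w) @ v')"
    using cls_app[of "a # w" v] cls_app[of "a # w" v'] Cons.prems by simp
  then show ?case using Cons by simp
qed simp

lemma fv_in: "fv v \<in> Q \<rightarrow>\<^sub>E Q" if "v \<in> lists S"
  using foldl_Q that by (auto simp: fv_def)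

lemma fin_funs: "finite (Q \<rightarrow>\<^sub>E Q)"
  using finQ by (intro finite_PiE) auto

lemma cls_in: "x \<in> lists S \<Longrightarrow> cls x \<in> mn_quotient S L"
  by (simp add: mn_quotient_def)

lemma fin_quot: "finite (mn_quotient S L)"
proof -
  have "mn_quotient S L \<subseteq> G ` Q"
    using cls_G foldl_Q[OF q0] by (auto simp: mn_quotient_def)
  then show ?thesis using finQ finite_subset by blast
qed

lemma self_cls: "x \<in> lists S \<Longrightarrow> x \<in> cls x"
  by (simp add: mn_class_def mn_equiv_def)

lemma cls_L: "x \<in> lists S \<Longrightarrow> x \<in> L \<longleftrightarrow> cls x \<subseteq> L"
proof
  assume "x \<in> L"
  then show "cls x \<subseteq> L"
    unfolding mn_class_def mn_equiv_def by (auto dest: bspec[of _ _ "[]"])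
qed (use self_cls in blast)

lemma psi_lists: "x \<in> lists S \<Longrightarrow> psi S L x \<in> lists (mn_quotient S L)"
proof -
  assume x: "x \<in> lists S"
  have "drop i x \<in> lists S" for i using x set_drop_subset[of i x] by auto
  then show ?thesis by (auto simp: psi_def mn_quotient_def)
qed

definition dM :: "(nat \<Rightarrow> nat) \<Rightarrow> 'a \<Rightarrow> (nat \<Rightarrow> nat) \<times> 'a list set" where
  "dM h b = (restrict (\<lambda>q. h (\<delta> q b)) Q, G (h (\<delta> q0 b)))"

lemma dM_fv: "b \<in> S \<Longrightarrow> v \<in> lists S \<Longrightarrow> dM (fv v) b = (fv (b # v), cls (b # v))"
proof -
  assume b: "b \<in> S" and v: "v \<in> lists S"
  have 1: "restrict (\<lambda>q. fv v (\<delta> q b)) Q = fv (b # v)"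
    unfolding fv_def by (rule restrict_ext) (use cl b in simp)
  have "cls ([b] @ v) = G (fv v (foldl \<delta> q0 [b]))"
    by (rule cls_app) (use b v in auto)
  then have 2: "G (fv v (\<delta> q0 b)) = cls (b # v)" by simp
  show ?thesis unfolding dM_def 1 2 ..
qed

lemma mealy: "x \<in> lists S \<Longrightarrow> v \<in> lists S \<Longrightarrow> rev (mealy_run dM (fv v) (rev x)) = sfx cls x v"
proof (induction x arbitrary: v rule: rev_induct)
  case (snoc a w)
  have a: "a \<in> S" and w: "w \<in> lists S" using snoc.prems by auto
  have "mealy_run dM (fv v) (rev (w @ [a])) = cls (a # v) # mealy_run dM (fv (a # v)) (rev w)"
    using dM_fv[OF a snoc.prems(2)] by simp
  then show ?case using snoc.IH[OF w, of "a # v"] a snoc.prems(2) by (simp add: sfx_snoc)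
qed simp

lemma trans: "left_transduction S (mn_quotient S L) (psi S L)"
proof (rule transI_gen[where Q = "fv ` lists S" and qi = "fv []" and \<delta> = dM])
  show "finite (fv ` lists S)"
    by (rule finite_subset[OF _ fin_funs]) (use fv_in in auto)
  show "\<forall>q\<in>fv ` lists S. \<forall>b\<in>S. fst (dM q b) \<in> fv ` lists S \<and> snd (dM q b) \<in> mn_quotient S L"
  proof (intro ballI)
    fix q b assume "q \<in> fv ` lists S" "b \<in> S"
    then obtain v where "v \<in> lists S" "q = fv v" by auto
    then show "fst (dM q b) \<in> fv ` lists S \<and> snd (dM q b) \<in> mn_quotient S L"
      using dM_fv[OF \<open>b \<in> S\<close> \<open>v \<in> lists S\<close>] cls_in[of "b # v"] \<open>b \<in> S\<close> by auto
  qed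
  show "\<forall>x\<in>lists S. psi S L x = rev (mealy_run dM (fv []) (rev x))"
    using mealy[of _ "[]"] by (simp add: psi_sfx)
  show "finite S" by (rule finS)
  show "finite (mn_quotient S L)" by (rule fin_quot)
  show "fv [] \<in> fv ` lists S" by blast
qed

definition T :: "'a list set list \<Rightarrow> (nat \<Rightarrow> nat) set" where
  "T u = {fv v | v w. v \<in> lists S \<and> w \<in> lists S \<and> sfx cls w v = u}"

definition dT :: "(nat \<Rightarrow> nat) set \<Rightarrow> 'a list set \<Rightarrow> (nat \<Rightarrow> nat) set" where
  "dT X c = {fv v | v a. v \<in> lists S \<and> a \<in> S \<and> fv (a # v) \<in> X \<and> cls (a # v) = c}"

definition fl :: "'a list set list \<Rightarrow> bool option" where
  "fl u = (if u = [] then None else Some (hd u \<subseteq> L))"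

definition dR where
  "dR st c = (dT (fst st) c, case snd st of None \<Rightarrow> Some (c \<subseteq> L) | Some b \<Rightarrow> Some b)"

lemma T_snoc: "T (u @ [c]) = dT (T u) c"
proof
  show "T (u @ [c]) \<subseteq> dT (T u) c"
  proof
    fix h assume "h \<in> T (u @ [c])"
    then obtain v w where vw: "h = fv v" "v \<in> lists S" "w \<in> lists S" "sfx cls w v = u @ [c]"
      unfolding T_def by blast
    then have "w \<noteq> []" by (cases w) auto
    then obtain w0 a where w: "w = w0 @ [a]" by (cases w rule: rev_cases) auto
    with vw have "sfx cls w0 (a # v) = u" "cls (a # v) = c" "a \<in> S" "w0 \<in> lists S"
      by (auto simp: sfx_snoc)
    then have tu: "fv (a # v) \<in> T u" unfolding T_def mem_Collect_eq
      using vw(2) by (intro exI[of _ "a # v"] exI[of _ w0] conjI refl) auto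
    show "h \<in> dT (T u) c" unfolding dT_def mem_Collect_eq
      using vw tu \<open>a \<in> S\<close> \<open>cls (a # v) = c\<close> by (intro exI[of _ v] exI[of _ a] conjI) auto
  qed
  show "dT (T u) c \<subseteq> T (u @ [c])"
  proof
    fix h assume "h \<in> dT (T u) c"
    then obtain v a where va: "h = fv v" "v \<in> lists S" "a \<in> S" "fv (a # v) \<in> T u" "cls (a # v) = c"
      unfolding dT_def by blast
    then obtain v' w where "fv (a # v) = fv v'" "v' \<in> lists S" "w \<in> lists S" "sfx cls w v' = u"
      unfolding T_def by blast
    then have "sfx cls w (a # v) = u" using sfx_inv[of w "a # v" v'] va by auto
    then have "sfx cls (w @ [a]) v = u @ [c]" using va by (simp add: sfx_snoc)
    then show "h \<in> T (u @ [c])" unfolding T_def mem_Collect_eq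
      using va \<open>w \<in> lists S\<close> by (intro exI[of _ v] exI[of _ "w @ [a]"] conjI) auto
  qed
qed

lemma T_sub: "T u \<subseteq> Q \<rightarrow>\<^sub>E Q"
proof
  fix h assume "h \<in> T u"
  then obtain v where "v \<in> lists S" "h = fv v" unfolding T_def by blast
  then show "h \<in> Q \<rightarrow>\<^sub>E Q" using fv_in by metis
qed

lemma dT_sub: "dT X c \<subseteq> Q \<rightarrow>\<^sub>E Q"
proof
  fix h assume "h \<in> dT X c"
  then obtain v where "v \<in> lists S" "h = fv v" unfolding dT_def by blast
  then show "h \<in> Q \<rightarrow>\<^sub>E Q" using fv_in by metis
qed

lemma run_R: "foldl dR (T [], None) u = (T u, fl u)"
proof (induction u rule: rev_induct)
  case Nil then show ?case by (simp add: fl_def)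
next
  case (snoc c u)
  have "T (u @ [c]) = dT (T u) c" by (rule T_snoc)
  with snoc show ?case by (auto simp: dR_def fl_def split: option.split)
qed

lemma mem_T: "fv [] \<in> T u \<longleftrightarrow> u \<in> psi S L ` lists S"
proof
  assume "fv [] \<in> T u"
  then obtain v w where "fv [] = fv v" "v \<in> lists S" "w \<in> lists S" "sfx cls w v = u"
    unfolding T_def by blast
  then have "sfx cls w [] = u" using sfx_inv[of w "[]" v] by auto
  then show "u \<in> psi S L ` lists S" using psi_sfx[of S L w] \<open>w \<in> lists S\<close>
    by (intro image_eqI[of _ _ w]) simp_all
next
  assume "u \<in> psi S L ` lists S"
  then obtain w where "w \<in> lists S" "u = sfx cls w []" using psi_sfx by auto
  then show "fv [] \<in> T u" unfolding T_def mem_Collect_eq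
    by (intro exI[of _ "[]"] exI[of _ w] conjI refl) auto
qed

lemma mem_L: "u \<in> psi S L ` L \<longleftrightarrow> u \<in> psi S L ` lists S \<and> (u = [] \<and> [] \<in> L \<or> u \<noteq> [] \<and> hd u \<subseteq> L)"
proof
  assume "u \<in> psi S L ` L"
  then obtain x where x: "x \<in> L" "u = psi S L x" by auto
  then have xs: "x \<in> lists S" using LS by auto
  have uim: "u \<in> psi S L ` lists S" using x(2) xs by blast
  show "u \<in> psi S L ` lists S \<and> (u = [] \<and> [] \<in> L \<or> u \<noteq> [] \<and> hd u \<subseteq> L)"
  proof (cases x)
    case Nil then show ?thesis using x uim by (auto simp: psi_def)
  next
    case (Cons a y) then show ?thesis using x xs uim cls_L[of x] by (auto simp: psi_Cons)
  qed
next
  assume a: "u \<in> psi S L ` lists S \<and> (u = [] \<and> [] \<in> L \<or> u \<noteq> [] \<and> hd u \<subseteq> L)"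
  then obtain x where x: "x \<in> lists S" "u = psi S L x" by auto
  show "u \<in> psi S L ` L"
  proof (cases x)
    case Nil
    then have "x \<in> L" using x a by (auto simp: psi_def)
    then show ?thesis using x(2) by blast
  next
    case (Cons b y)
    then have "x \<in> L" using x a cls_L[of x] by (auto simp: psi_Cons)
    then show ?thesis using x(2) by blast
  qed
qed


abbreviation "QR \<equiv> Pow (Q \<rightarrow>\<^sub>E Q) \<times> (UNIV :: bool option set)"

lemma finR: "finite QR"
  using fin_funs by simp

lemma closedR: "\<forall>q\<in>QR. \<forall>a\<in>mn_quotient S L. dR q a \<in> QR"
  using dT_sub by (auto simp: dR_def simp del: PiE_iff)

lemma psi_img: "psi S L ` lists S \<subseteq> lists (mn_quotient S L)"
  using psi_lists by blast

lemma init: "(T [], None) \<in> QR"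
  using T_sub by (auto simp del: PiE_iff)

lemma reg1: "regular (mn_quotient S L) (psi S L ` lists S)"
proof (rule regularI_gen[where Q = QR and qi = "(T [], None)" and \<delta> = dR and F = "{st. fv [] \<in> fst st}"])
  show "\<forall>w\<in>lists (mn_quotient S L). (w \<in> psi S L ` lists S) = (foldl dR (T [], None) w \<in> {st. fv [] \<in> fst st})"
    using run_R mem_T by simp
qed (use fin_quot psi_img finR init closedR in auto)

lemma reg2: "regular (mn_quotient S L) (psi S L ` L)"
proof (rule regularI_gen[where Q = QR and qi = "(T [], None)" and \<delta> = dR
     and F = "{st. fv [] \<in> fst st \<and> (snd st = None \<and> [] \<in> L \<or> snd st = Some True)}"])
  show "psi S L ` L \<subseteq> lists (mn_quotient S L)" using psi_img LS by blast
  show "\<forall>w\<in>lists (mn_quotient S L). (w \<in> psi S L ` L) = (foldl dR (T [], None) w \<in>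
     {st. fv [] \<in> fst st \<and> (snd st = None \<and> [] \<in> L \<or> snd st = Some True)})"
    using run_R mem_T mem_L by (auto simp: fl_def)
qed (use fin_quot finR init closedR in auto)

lemma red: "left_reduction S (mn_quotient S L) (psi S L) L (psi S L ` L)"
  unfolding left_reduction_def
proof (intro conjI trans ballI)
  fix x assume x: "x \<in> lists S"
  show "x \<in> L \<longleftrightarrow> psi S L x \<in> psi S L ` L"
  proof
    assume "psi S L x \<in> psi S L ` L"
    then obtain y where y: "y \<in> L" "psi S L x = psi S L y" by auto
    then have ys: "y \<in> lists S" using LS by auto
    show "x \<in> L"
    proof (cases x)
      case Nil then show ?thesis using y by (auto simp: psi_def)
    next
      case (Cons a x')
      then obtain b y' where "y = b # y'" using y by (cases y) (auto simp: psi_def)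
      then have "cls x = cls y" using y Cons by (simp add: psi_Cons)
      then show ?thesis using cls_L[OF x] cls_L[OF ys] y by simp
    qed
  qed auto
qed

end

theorem lemma4p2:
  fixes S :: "'a set" and L :: "'a list set"
  assumes "regular S L"
  shows "left_transduction S (mn_quotient S L) (psi S L)
       \<and> regular (mn_quotient S L) (psi S L ` lists S)
       \<and> regular (mn_quotient S L) (psi S L ` L)
       \<and> left_reduction S (mn_quotient S L) (psi S L) L (psi S L ` L)"
proof -
  obtain Q q0 \<delta> F where "mn_dfa S L Q q0 \<delta> F"
    using assms unfolding regular_def mn_dfa_def by blast
  then interpret mn_dfa S L Q q0 \<delta> F .
  show ?thesis using trans reg1 reg2 red by blast
qed

end
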